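(* Let $\mathcal M$ be the set of pairs of measurable functions $(\mu(\cdot),\sigma(\cdot))$ from $[0,1]$ into $D$. Then $$\inf_{(\mu,\sigma)\in\mathcal M}\frac{\Big(\int_0^1\big(h_0\mu(\omega)+h_1\sigma(\omega)\big)\,d\omega\Big)^2}{\int_0^1\big(\mu^2(\omega)+\sigma^2(\omega)\big)\,d\omega}=\min_{(x,y)\in D}\psi(x,y),$$ and the infimum on the left is attained.
   Context: Let $0<\mu_-<\mu_+$ and $0<\sigma_-<\sigma_+$ be real numbers, $D=[\mu_-,\mu_+]\times[\sigma_-,\sigma_+]$, and $h_0,h_1\in\mathbb R$. Write $\mu_M=(\mu_++\mu_-)/2$ and $\sigma_M=(\sigma_++\sigma_-)/2$. For $(x,y)\in D$ let $$\psi(x,y)=\frac{(h_0x+h_1y)^2}{2\mu_Mx+2\sigma_My-\mu_-\mu_+-\sigma_-\sigma_+};$$ the denominator is positive on $D$. *)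

theory Defs
  imports "HOL-Analysis.Analysis"
begin

definition psi :: "real \<Rightarrow> real \<Rightarrow> real \<Rightarrow> real \<Rightarrow> real \<Rightarrow> real \<Rightarrow> real \<Rightarrow> real \<Rightarrow> real" where
  "psi mu_m mu_p sg_m sg_p h0 h1 x y =
     (h0 * x + h1 * y)^2 /
     (2 * ((mu_p + mu_m) / 2) * x + 2 * ((sg_p + sg_m) / 2) * y - mu_m * mu_p - sg_m * sg_p)"

definition admissible :: "real \<Rightarrow> real \<Rightarrow> real \<Rightarrow> real \<Rightarrow> (real \<Rightarrow> real) \<Rightarrow> (real \<Rightarrow> real) \<Rightarrow> bool" where
  "admissible mu_m mu_p sg_m sg_p m s \<longleftrightarrow>
     set_borel_measurable lebesgue {0..1} m \<and> set_borel_measurable lebesgue {0..1} s \<and>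
     (\<forall>w\<in>{0..1}. (m w, s w) \<in> {mu_m..mu_p} \<times> {sg_m..sg_p})"

definition ratio :: "real \<Rightarrow> real \<Rightarrow> (real \<Rightarrow> real) \<Rightarrow> (real \<Rightarrow> real) \<Rightarrow> real" where
  "ratio h0 h1 m s =
     (LINT w:{0..1}|lebesgue. h0 * m w + h1 * s w)^2 /
     (LINT w:{0..1}|lebesgue. (m w)^2 + (s w)^2)"

end

theory Submission
  imports Defs
begin

lemma bnd_integrable:
  fixes m :: "real \<Rightarrow> real"
  assumes "set_borel_measurable lebesgue {0..1} m" "\<And>w. w \<in> {0..1} \<Longrightarrow> \<bar>m w\<bar> \<le> B"
  shows "set_integrable lebesgue {0..1} m"
proof (rule set_integrable_bound[where f="\<lambda>_. B"])
  show "set_integrable lebesgue {0..1::real} (\<lambda>_. B)"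
    unfolding set_integrable_def
    by (rule integrable_scaleR_left) (simp add: emeasure_lborel_Icc_eq)
  show "set_borel_measurable lebesgue {0..1} m" by fact
  show "AE x in lebesgue. x \<in> {0..1} \<longrightarrow> norm (m x) \<le> norm B"
    using assms(2) by (auto intro!: AE_I2) (smt (verit) real_norm_def)
qed

lemma meas01: "measure lebesgue {0..1::real} = 1"
  by simp

lemma int_const: "(LINT w:{0..1::real}|lebesgue. (c::real)) = c"
  using set_integral_const[of "{0..1::real}" lebesgue c] by (simp add: emeasure_lborel_Icc_eq)

lemma int_ind: assumes "0 \<le> t" "t \<le> 1"
  shows "(LINT w:{0..1::real}|lebesgue. indicator {0..t} w) = t"
proof -
  have "(LINT w:{0..1::real}|lebesgue. indicator {0..t} w) = integral\<^sup>L lebesgue (indicator {0..t} :: real \<Rightarrow> real)"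
    unfolding set_lebesgue_integral_def using assms
    by (intro Bochner_Integration.integral_cong) (auto split: split_indicator)
  also have "\<dots> = t" using assms by (simp add: emeasure_lborel_Icc_eq)
  finally show ?thesis .
qed

lemma sq_meas:
  fixes m :: "real \<Rightarrow> real"
  assumes "set_borel_measurable lebesgue A m"
  shows "set_borel_measurable lebesgue A (\<lambda>w. m w ^ 2)"
proof -
  have e: "(\<lambda>x. indicator A x *\<^sub>R (m x ^ 2)) = (\<lambda>x. (indicator A x *\<^sub>R m x) * (indicator A x *\<^sub>R m x))"
    by (auto simp: indicator_def power2_eq_square)
  show ?thesis using assms unfolding set_borel_measurable_def e by measurable
qed

lemma one_dim:
  fixes m :: "real \<Rightarrow> real"
  assumes "0 < a" "a < b" "set_borel_measurable lebesgue {0..1} m"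
    "\<And>w. w \<in> {0..1} \<Longrightarrow> a \<le> m w \<and> m w \<le> b"
  shows "set_integrable lebesgue {0..1} m" "set_integrable lebesgue {0..1} (\<lambda>w. m w ^ 2)"
    "a \<le> (LINT w:{0..1}|lebesgue. m w)" "(LINT w:{0..1}|lebesgue. m w) \<le> b"
    "(LINT w:{0..1}|lebesgue. m w ^ 2) \<le> (a+b) * (LINT w:{0..1}|lebesgue. m w) - a*b"
    "a^2 \<le> (LINT w:{0..1}|lebesgue. m w ^ 2)"
proof -
  show i1: "set_integrable lebesgue {0..1} m"
    by (rule bnd_integrable[OF assms(3), of b]) (use assms in fastforce)
  show i2: "set_integrable lebesgue {0..1} (\<lambda>w. m w ^ 2)"
  proof (rule bnd_integrable[OF sq_meas[OF assms(3)], of "b^2"])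
    fix w :: real assume "w \<in> {0..1}"
    with assms have "0 \<le> m w" "m w \<le> b" by force+
    then show "\<bar>m w ^ 2\<bar> \<le> b^2" by (simp add: power_mono)
  qed
  have ic: "set_integrable lebesgue {0..1::real} (\<lambda>_. c)" for c :: real
    unfolding set_integrable_def
    by (rule integrable_scaleR_left) (simp add: emeasure_lborel_Icc_eq)
  show "a \<le> (LINT w:{0..1}|lebesgue. m w)"
    using set_integral_mono[OF ic i1, of a] assms(4) int_const[of a] by auto
  show "(LINT w:{0..1}|lebesgue. m w) \<le> b"
    using set_integral_mono[OF i1 ic, of b] assms(4) int_const[of b] by auto
  show "a^2 \<le> (LINT w:{0..1}|lebesgue. m w ^ 2)"
  proof -
    have "\<And>w. w \<in> {0..1} \<Longrightarrow> a^2 \<le> m w ^ 2"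
      using assms by (meson less_le_trans power_mono less_imp_le)
    then show ?thesis using set_integral_mono[OF ic i2, of "a^2"] int_const[of "a^2"] by auto
  qed
  have i3: "set_integrable lebesgue {0..1} (\<lambda>w. (a+b) * m w - a*b)"
    using i1 ic by auto
  have "(LINT w:{0..1}|lebesgue. m w ^ 2) \<le> (LINT w:{0..1}|lebesgue. (a+b) * m w - a*b)"
  proof (rule set_integral_mono[OF i2 i3])
    fix w :: real assume "w \<in> {0..1}"
    with assms(4) have "a \<le> m w" "m w \<le> b" by auto
    then have "(m w - a) * (m w - b) \<le> 0" by (simp add: mult_nonneg_nonpos)
    then show "m w ^ 2 \<le> (a+b) * m w - a*b" by (simp add: algebra_simps power2_eq_square)
  qed
  also have "\<dots> = (a+b) * (LINT w:{0..1}|lebesgue. m w) - a*b"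
    using i1 ic by (simp add: int_const)
  finally show "(LINT w:{0..1}|lebesgue. m w ^ 2) \<le> (a+b) * (LINT w:{0..1}|lebesgue. m w) - a*b" .
qed

lemma bang:
  fixes a b x :: real
  assumes "0 < a" "a < b" "a \<le> x" "x \<le> b"
  defines "m \<equiv> (\<lambda>w::real. a + (b-a) * indicator {0..(x-a)/(b-a)} w)"
  shows "set_borel_measurable lebesgue {0..1} m" "\<And>w. a \<le> m w \<and> m w \<le> b"
    "(LINT w:{0..1}|lebesgue. m w) = x"
    "(LINT w:{0..1}|lebesgue. m w ^ 2) = (a+b) * x - a*b"
proof -
  define t where "t = (x-a)/(b-a)"
  have t: "0 \<le> t" "t \<le> 1" using assms by (auto simp: t_def field_simps)
  show ms: "set_borel_measurable lebesgue {0..1} m"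
    unfolding set_borel_measurable_def m_def by (intro measurable_completion) measurable
  show "\<And>w. a \<le> m w \<and> m w \<le> b" using assms by (auto simp: m_def indicator_def)
  have ic: "set_integrable lebesgue {0..1::real} (\<lambda>_. c)" for c :: real
    unfolding set_integrable_def
    by (rule integrable_scaleR_left) (simp add: emeasure_lborel_Icc_eq)
  have ii: "set_integrable lebesgue {0..1::real} (indicator {0..t} :: real \<Rightarrow> real)"
  proof (rule bnd_integrable[of _ 1])
    show "set_borel_measurable lebesgue {0..1} (indicator {0..t} :: real \<Rightarrow> real)"
      unfolding set_borel_measurable_def by (intro measurable_completion) measurable
  qed (auto simp: indicator_def)
  have "(LINT w:{0..1}|lebesgue. m w) = a + (b-a) * t"
    unfolding m_def t_def[symmetric] using ic ii t by (simp add: int_const int_ind)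
  also have "\<dots> = x" using assms by (simp add: t_def)
  finally show mx: "(LINT w:{0..1}|lebesgue. m w) = x" .
  have "m w ^ 2 = (a+b) * m w - a*b" for w
    by (auto simp: m_def indicator_def algebra_simps power2_eq_square)
  then have "(LINT w:{0..1}|lebesgue. m w ^ 2) = (LINT w:{0..1}|lebesgue. (a+b) * m w - a*b)" by simp
  also have "\<dots> = (a+b) * (LINT w:{0..1}|lebesgue. m w) - a*b"
    using bnd_integrable[OF ms, of b] \<open>\<And>w. a \<le> m w \<and> m w \<le> b\<close> assms ic
    by (subst set_integral_diff) (auto simp: int_const)
  finally show "(LINT w:{0..1}|lebesgue. m w ^ 2) = (a+b) * x - a*b" using mx by simp
qed

lemma cont_lemma:
  fixes a b c d h0 h1 :: real
  assumes "\<And>x y. a \<le> x \<Longrightarrow> c \<le> y \<Longrightarrow> 0 < (b+a) * x + (d+c)*y - a*b - c*d"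
  shows "continuous_on ({a..b} \<times> {c..d}) (\<lambda>p::real\<times>real. (h0 * fst p + h1 * snd p)^2 / ((b+a) * fst p + (d+c)* snd p - a*b - c*d))"
proof (rule continuous_on_divide)
  show "continuous_on ({a..b} \<times> {c..d}) (\<lambda>p::real\<times>real. (h0 * fst p + h1 * snd p)^2)"
    by (intro continuous_intros)
  show "continuous_on ({a..b} \<times> {c..d}) (\<lambda>p::real\<times>real. (b+a) * fst p + (d+c) * snd p - a*b - c*d)"
    by (intro continuous_intros)
  show "\<forall>p\<in>{a..b} \<times> {c..d}. (b+a) * fst p + (d+c) * snd p - a*b - c*d \<noteq> 0"
  proof
    fix p :: "real \<times> real" assume "p \<in> {a..b} \<times> {c..d}"
    then have "0 < (b+a) * fst p + (d+c) * snd p - a*b - c*d" using assms by (cases p) auto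
    then show "(b+a) * fst p + (d+c) * snd p - a*b - c*d \<noteq> 0" by simp
  qed
qed

theorem mainTheorem3:
  fixes mu_m mu_p sg_m sg_p h0 h1 :: real
  assumes "0 < mu_m" "mu_m < mu_p" "0 < sg_m" "sg_m < sg_p"
  defines "D \<equiv> {mu_m..mu_p} \<times> {sg_m..sg_p}"
  defines "M \<equiv> {(m, s). admissible mu_m mu_p sg_m sg_p m s}"
  shows "\<exists>(x0, y0)\<in>D.
           (\<forall>(x, y)\<in>D. psi mu_m mu_p sg_m sg_p h0 h1 x0 y0 \<le> psi mu_m mu_p sg_m sg_p h0 h1 x y) \<and>
           (INF (m, s)\<in>M. ratio h0 h1 m s) = psi mu_m mu_p sg_m sg_p h0 h1 x0 y0 \<and>
           (\<exists>(m, s)\<in>M. ratio h0 h1 m s = psi mu_m mu_p sg_m sg_p h0 h1 x0 y0)"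
proof -
  let ?psi = "psi mu_m mu_p sg_m sg_p h0 h1"
  define Den where "Den = (\<lambda>x y. (mu_p + mu_m) * x + (sg_p + sg_m) * y - mu_m * mu_p - sg_m * sg_p)"
  have psi_eq: "?psi x y = (h0 * x + h1 * y)^2 / Den x y" for x y
  proof -
    have e: "2 * ((mu_p + mu_m) / 2) * x + 2 * ((sg_p + sg_m) / 2) * y - mu_m * mu_p - sg_m * sg_p = Den x y"
      unfolding Den_def by (simp add: field_simps)
    show ?thesis unfolding psi_def by (simp only: e)
  qed
  have den_pos: "0 < Den x y" if "mu_m \<le> x" "sg_m \<le> y" for x y
  proof -
    have "(mu_p + mu_m) * mu_m \<le> (mu_p + mu_m) * x" using that assms by (intro mult_left_mono) auto
    moreover have "(sg_p + sg_m) * sg_m \<le> (sg_p + sg_m) * y" using that assms by (intro mult_left_mono) auto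
    moreover have "0 < mu_m * mu_m" "0 < sg_m * sg_m" using assms by auto
    ultimately show ?thesis unfolding Den_def by (simp add: algebra_simps)
  qed
  have cont: "continuous_on D (\<lambda>p. ?psi (fst p) (snd p))"
    unfolding psi_eq Den_def D_def
    by (rule cont_lemma[OF den_pos[unfolded Den_def]])
  have cD: "compact D" unfolding D_def by (intro compact_Times compact_Icc)
  have nD: "D \<noteq> {}" using assms unfolding D_def by auto
  from continuous_attains_inf[OF cD nD cont] obtain p0 where
    p0: "p0 \<in> D" "\<forall>p\<in>D. ?psi (fst p0) (snd p0) \<le> ?psi (fst p) (snd p)"
    by blast
  obtain x0 y0 where p0e: "p0 = (x0, y0)" by (cases p0)
  have xy0: "mu_m \<le> x0" "x0 \<le> mu_p" "sg_m \<le> y0" "y0 \<le> sg_p" using p0 p0e D_def by auto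
  have minD: "?psi x0 y0 \<le> ?psi x y" if "(x,y) \<in> D" for x y
    using p0(2) that p0e by fastforce
  have lower: "?psi x0 y0 \<le> ratio h0 h1 m s" if "(m, s) \<in> M" for m s
  proof -
    have adm: "set_borel_measurable lebesgue {0..1} m" "set_borel_measurable lebesgue {0..1} s"
      "\<And>w. w \<in> {0..1} \<Longrightarrow> mu_m \<le> m w \<and> m w \<le> mu_p"
      "\<And>w. w \<in> {0..1} \<Longrightarrow> sg_m \<le> s w \<and> s w \<le> sg_p"
      using that unfolding M_def admissible_def by auto
    note A = one_dim[OF assms(1,2) adm(1,3)]
    note B = one_dim[OF assms(3,4) adm(2,4)]
    define X where "X = (LINT w:{0..1}|lebesgue. m w)"
    define Y where "Y = (LINT w:{0..1}|lebesgue. s w)"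
    have XY: "(X, Y) \<in> D" using A B unfolding D_def X_def Y_def by auto
    have num: "(LINT w:{0..1}|lebesgue. h0 * m w + h1 * s w) = h0 * X + h1 * Y"
      using A(1) B(1) unfolding X_def Y_def by simp
    have den: "(LINT w:{0..1}|lebesgue. (m w)^2 + (s w)^2) = (LINT w:{0..1}|lebesgue. (m w)^2) + (LINT w:{0..1}|lebesgue. (s w)^2)"
      using A(2) B(2) by simp
    have dpos: "0 < (LINT w:{0..1}|lebesgue. (m w)^2) + (LINT w:{0..1}|lebesgue. (s w)^2)"
      using A(6) B(6) assms by (smt (verit) zero_less_power)
    have dle: "(LINT w:{0..1}|lebesgue. (m w)^2) + (LINT w:{0..1}|lebesgue. (s w)^2) \<le> Den X Y"
      using A(5) B(5) unfolding Den_def X_def Y_def by (simp add: algebra_simps)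
    have "?psi X Y \<le> ratio h0 h1 m s"
      unfolding psi_eq ratio_def num den
      by (rule divide_left_mono[OF dle _]) (use dpos dle in \<open>auto intro!: mult_pos_pos\<close>)
    with minD[OF XY] show ?thesis by linarith
  qed
  define m0 where "m0 \<equiv> (\<lambda>w::real. mu_m + (mu_p-mu_m) * indicator {0..(x0-mu_m)/(mu_p-mu_m)} w)"
  define s0 where "s0 \<equiv> (\<lambda>w::real. sg_m + (sg_p-sg_m) * indicator {0..(y0-sg_m)/(sg_p-sg_m)} w)"
  have Bm: "set_borel_measurable lebesgue {0..1} m0" "\<And>w. mu_m \<le> m0 w \<and> m0 w \<le> mu_p"
    "(LINT w:{0..1}|lebesgue. m0 w) = x0"
    "(LINT w:{0..1}|lebesgue. m0 w ^ 2) = (mu_m+mu_p) * x0 - mu_m * mu_p"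
    unfolding m0_def
    by (rule bang(1)[OF assms(1,2) xy0(1,2)], rule bang(2)[OF assms(1,2) xy0(1,2)],
        rule bang(3)[OF assms(1,2) xy0(1,2)], rule bang(4)[OF assms(1,2) xy0(1,2)])
  have Bs: "set_borel_measurable lebesgue {0..1} s0" "\<And>w. sg_m \<le> s0 w \<and> s0 w \<le> sg_p"
    "(LINT w:{0..1}|lebesgue. s0 w) = y0"
    "(LINT w:{0..1}|lebesgue. s0 w ^ 2) = (sg_m+sg_p) * y0 - sg_m * sg_p"
    unfolding s0_def
    by (rule bang(1)[OF assms(3,4) xy0(3,4)], rule bang(2)[OF assms(3,4) xy0(3,4)],
        rule bang(3)[OF assms(3,4) xy0(3,4)], rule bang(4)[OF assms(3,4) xy0(3,4)])
  have m0M: "(m0, s0) \<in> M" unfolding M_def admissible_def using Bm Bs by auto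
  have im: "set_integrable lebesgue {0..1} m0" "set_integrable lebesgue {0..1} (\<lambda>w. m0 w ^ 2)"
    using one_dim[OF assms(1,2) Bm(1)] Bm(2) by auto
  have is0: "set_integrable lebesgue {0..1} s0" "set_integrable lebesgue {0..1} (\<lambda>w. s0 w ^ 2)"
    using one_dim[OF assms(3,4) Bs(1)] Bs(2) by auto
  have att: "ratio h0 h1 m0 s0 = ?psi x0 y0"
    unfolding ratio_def psi_eq using im is0 Bm(3,4) Bs(3,4)
    by (simp add: Den_def algebra_simps)
  have inf: "(INF (m, s)\<in>M. ratio h0 h1 m s) = ?psi x0 y0"
  proof (rule cInf_eq_minimum)
    show "?psi x0 y0 \<in> (\<lambda>(m, s). ratio h0 h1 m s) ` M"
      using m0M att by (auto intro!: image_eqI[of _ _ "(m0, s0)"])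
    show "\<And>z. z \<in> (\<lambda>(m, s). ratio h0 h1 m s) ` M \<Longrightarrow> ?psi x0 y0 \<le> z"
      using lower by auto
  qed
  show ?thesis
    using p0 p0e minD inf m0M att by (auto intro!: bexI[of _ "(x0,y0)"])
qed

end
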